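(* Let $r\ge6$ and $G\in\mathcal{G}(r,r)$. Then any two distinct configurations in $G$ are disjoint.
   Context: $\mathcal{G}(\Delta,\omega)$ denotes the class of finite simple graphs $G$ with maximum degree $\Delta(G)\le\Delta$ and clique number $\omega(G)\le\omega$. For $G\in\mathcal{G}(r,r)$, a configuration in $G$ is a set $C\subseteq V(G)$ with $|C|=r+1$ such that the induced subgraph $G[C]$ is a complete graph with exactly two edges missing. *)

theory Defs
  imports Main
begin

definition simple_graph :: "'a set \<Rightarrow> ('a \<Rightarrow> 'a \<Rightarrow> bool) \<Rightarrow> bool" where
  "simple_graph V E \<longleftrightarrow> finite V \<and> (\<forall>x y. E x y \<longrightarrow> x \<in> V \<and> y \<in> V)
     \<and> (\<forall>x y. E x y \<longrightarrow> E y x) \<and> (\<forall>x. \<not> E x x)"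

definition degree :: "'a set \<Rightarrow> ('a \<Rightarrow> 'a \<Rightarrow> bool) \<Rightarrow> 'a \<Rightarrow> nat" where
  "degree V E v = card {u \<in> V. E v u}"

definition is_clique :: "'a set \<Rightarrow> ('a \<Rightarrow> 'a \<Rightarrow> bool) \<Rightarrow> 'a set \<Rightarrow> bool" where
  "is_clique V E K \<longleftrightarrow> K \<subseteq> V \<and> (\<forall>x\<in>K. \<forall>y\<in>K. x \<noteq> y \<longrightarrow> E x y)"

definition in_class_G :: "nat \<Rightarrow> nat \<Rightarrow> 'a set \<Rightarrow> ('a \<Rightarrow> 'a \<Rightarrow> bool) \<Rightarrow> bool" where
  "in_class_G \<Delta> \<omega> V E \<longleftrightarrow> simple_graph V E
     \<and> (\<forall>v\<in>V. degree V E v \<le> \<Delta>)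
     \<and> (\<forall>K. is_clique V E K \<longrightarrow> card K \<le> \<omega>)"

definition missing_edges :: "('a \<Rightarrow> 'a \<Rightarrow> bool) \<Rightarrow> 'a set \<Rightarrow> 'a set set" where
  "missing_edges E C = {{x, y} | x y. x \<in> C \<and> y \<in> C \<and> x \<noteq> y \<and> \<not> E x y}"

definition configuration :: "nat \<Rightarrow> 'a set \<Rightarrow> ('a \<Rightarrow> 'a \<Rightarrow> bool) \<Rightarrow> 'a set \<Rightarrow> bool" where
  "configuration r V E C \<longleftrightarrow> C \<subseteq> V \<and> card C = r + 1 \<and> card (missing_edges E C) = 2"

end

theory Submission imports Defs begin
definition nonnb :: "('a \<Rightarrow> 'a \<Rightarrow> bool) \<Rightarrow> 'a set \<Rightarrow> 'a \<Rightarrow> 'a set" where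
  "nonnb E C u = {w\<in>C. w \<noteq> u \<and> \<not> E u w}"

lemma conf_fin: "configuration r V E C \<Longrightarrow> finite C"
  unfolding configuration_def by (intro card_ge_0_finite) simp

lemma nonnb_sub: "nonnb E C u \<subseteq> C - {u}"
  unfolding nonnb_def by auto

lemma nonnb_le2:
  assumes "configuration r V E C" and uC: "u \<in> C"
  shows "card (nonnb E C u) \<le> 2"
proof -
  have "finite (missing_edges E C)" using assms unfolding configuration_def
    by (intro card_ge_0_finite) simp
  have "card (nonnb E C u) \<le> card (missing_edges E C)"
  proof (rule card_inj_on_le[where f="\<lambda>w. {u,w}"])
    show "inj_on (\<lambda>w. {u, w}) (nonnb E C u)" unfolding inj_on_def nonnb_def
      by (auto simp: doubleton_eq_iff)
    show "(\<lambda>w. {u, w}) ` nonnb E C u \<subseteq> missing_edges E C"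
      unfolding nonnb_def missing_edges_def using uC by blast
  qed fact
  then show ?thesis using assms unfolding configuration_def by simp
qed

lemma nonnb_sum:
  assumes "configuration r V E C"
  shows "(\<Sum>u\<in>C. card (nonnb E C u)) \<le> 4"
proof -
  have fC: "finite C" using conf_fin[OF assms] .
  obtain e1 e2 where e: "missing_edges E C = {e1, e2}"
    using assms unfolding configuration_def card_2_iff by blast
  have "e1 \<in> missing_edges E C" "e2 \<in> missing_edges E C" using e by auto
  then obtain a b c d where ab: "e1 = {a,b}" and cd: "e2 = {c,d}"
    unfolding missing_edges_def by blast
  have "Sigma C (nonnb E C) \<subseteq> set [(a,b),(b,a),(c,d),(d,c)]"
  proof
    fix p assume "p \<in> Sigma C (nonnb E C)"
    then obtain u w where p: "p = (u,w)" "u \<in> C" "w \<in> nonnb E C u" by auto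
    then have "{u,w} \<in> missing_edges E C" unfolding nonnb_def missing_edges_def by auto
    then have "{u,w} = {a,b} \<or> {u,w} = {c,d}" using e ab cd by simp
    then show "p \<in> set [(a,b),(b,a),(c,d),(d,c)]" using p(1)
      unfolding doubleton_eq_iff by auto
  qed
  then have "card (Sigma C (nonnb E C)) \<le> card (set [(a,b),(b,a),(c,d),(d,c)])"
    by (intro card_mono) simp_all
  also have "\<dots> \<le> 4" using card_length[of "[(a,b),(b,a),(c,d),(d,c)]"] by simp
  finally have "card (Sigma C (nonnb E C)) \<le> 4" .
  moreover have "card (Sigma C (nonnb E C)) = (\<Sum>u\<in>C. card (nonnb E C u))"
    using fC by (intro card_SigmaI) (auto simp: nonnb_def)
  ultimately show ?thesis by simp
qed

lemma key:
  assumes G: "in_class_G r r V E" and cC: "configuration r V E C" and cD: "configuration r V E D"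
    and uC: "u \<in> C" and uD: "u \<in> D"
  shows "card (D - C) \<le> card (nonnb E C u) + card (nonnb E D u)"
proof -
  define N where "N = {w\<in>V. E u w}"
  define A where "A = (C - {u}) - nonnb E C u"
  define B where "B = (D - C) - nonnb E D u"
  have sg: "simple_graph V E" and fV: "finite V" and CV: "C \<subseteq> V" and DV: "D \<subseteq> V"
    using G cC cD unfolding in_class_G_def simple_graph_def configuration_def by auto
  have degN: "card N \<le> r" using G uC CV unfolding in_class_G_def degree_def N_def by auto
  have fN: "finite N" using fV unfolding N_def by auto
  have cCu: "card (C - {u}) = r" using cC uC conf_fin[OF cC] unfolding configuration_def by simp
  have mle: "card (nonnb E C u) \<le> r" using cCu nonnb_sub[of E C u] conf_fin[OF cC]
    by (metis card_mono finite_Diff)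
  have "A \<subseteq> N" unfolding A_def N_def nonnb_def using CV by auto
  moreover have "B \<subseteq> N" unfolding B_def N_def nonnb_def using DV uC by auto
  moreover have "A \<inter> B = {}" unfolding A_def B_def by auto
  ultimately have "card A + card B \<le> card N"
    by (metis card_Un_disjoint card_mono fN finite_subset Un_least)
  moreover have "card A = r - card (nonnb E C u)"
  proof -
    show ?thesis using cCu unfolding A_def using nonnb_sub[of E C u] conf_fin[OF cC]
      by (simp add: card_Diff_subset finite_subset)
  qed
  moreover have "card (D - C) - card (nonnb E D u) \<le> card B"
    unfolding B_def using conf_fin[OF cD]
    by (intro diff_card_le_card_Diff) (auto simp: nonnb_def)
  moreover have "card (nonnb E C u) \<le> 2" using nonnb_le2[OF cC uC] .
  ultimately show ?thesis using degN mle by linarith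
qed

lemma refined:
  assumes G: "in_class_G r r V E" and cC: "configuration r V E C"
    and uC: "u \<in> C" and dC: "d \<notin> C" and Eud: "E u d"
  shows "nonnb E C u \<noteq> {}"
proof
  assume em: "nonnb E C u = {}"
  define N where "N = {w\<in>V. E u w}"
  have fV: "finite V" and CV: "C \<subseteq> V" and dV: "d \<in> V"
    using G cC Eud unfolding in_class_G_def simple_graph_def configuration_def by auto
  have degN: "card N \<le> r" using G uC CV unfolding in_class_G_def degree_def N_def by auto
  have fN: "finite N" using fV unfolding N_def by auto
  have cCu: "card (C - {u}) = r" using cC uC conf_fin[OF cC] unfolding configuration_def by simp
  have "insert d (C - {u}) \<subseteq> N" using em CV dV Eud unfolding N_def nonnb_def by auto
  then have "card (insert d (C - {u})) \<le> card N" using fN by (rule card_mono[rotated])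
  moreover have "card (insert d (C - {u})) = r + 1" using cCu dC conf_fin[OF cC] by simp
  ultimately show False using degN by simp
qed

lemma half:
  assumes G: "in_class_G r r V E" and cC: "configuration r V E C" and cD: "configuration r V E D"
    and c: "C - D = {c}" and d: "D - C = {d}"
  shows "r + card (nonnb E C c) \<le> 4 + card (nonnb E D d)"
proof -
  define S where "S = C \<inter> D"
  define T where "T = {u\<in>S. E u d}"
  have fC: "finite C" using conf_fin[OF cC] .
  have sym: "\<And>x y. E x y \<Longrightarrow> E y x" using G unfolding in_class_G_def simple_graph_def by auto
  have CS: "C = insert c S" and cS: "c \<notin> S" using c unfolding S_def by auto
  have fS: "finite S" using fC unfolding S_def by auto
  have cardS: "card S = r" using cC CS cS fS unfolding configuration_def by simp
  have dC: "d \<notin> C" using d by auto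
  have "S - nonnb E D d \<subseteq> T" unfolding T_def S_def nonnb_def using dC sym by auto
  then have "card (S - nonnb E D d) \<le> card T" using fS unfolding T_def by (intro card_mono) auto
  moreover have "card S - card (nonnb E D d) \<le> card (S - nonnb E D d)"
    using fS conf_fin[OF cD] by (intro diff_card_le_card_Diff) (auto simp: nonnb_def)
  ultimately have r1: "r \<le> card T + card (nonnb E D d)" using cardS by linarith
  have TS: "T \<subseteq> S" unfolding T_def by auto
  have "\<And>u. u \<in> T \<Longrightarrow> 1 \<le> card (nonnb E C u)"
  proof -
    fix u assume "u \<in> T"
    then have "nonnb E C u \<noteq> {}" using refined[OF G cC _ dC] unfolding T_def S_def by auto
    moreover have "finite (nonnb E C u)" using fC unfolding nonnb_def by auto
    ultimately show "1 \<le> card (nonnb E C u)" by (simp add: Suc_le_eq card_gt_0_iff)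
  qed
  then have "card T \<le> (\<Sum>u\<in>T. card (nonnb E C u))"
    using sum_mono[of T "\<lambda>_. 1::nat"] by simp
  also have "\<dots> \<le> (\<Sum>u\<in>S. card (nonnb E C u))" using fS TS by (intro sum_mono2) auto
  finally have "card T + card (nonnb E C c) \<le> (\<Sum>u\<in>C. card (nonnb E C u))"
    using CS cS fS by simp
  also have "\<dots> \<le> 4" using nonnb_sum[OF cC] .
  finally show ?thesis using r1 by linarith
qed

theorem mainTheorem9:
  fixes r :: nat and V :: "'a set" and E :: "'a \<Rightarrow> 'a \<Rightarrow> bool" and C D :: "'a set"
  assumes "r \<ge> 6"
    and "in_class_G r r V E"
    and "configuration r V E C"
    and "configuration r V E D"
    and "C \<noteq> D"
  shows "C \<inter> D = {}"
proof (rule ccontr)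
  assume ne: "C \<inter> D \<noteq> {}"
  note r6 = assms(1) and G = assms(2) and cC = assms(3) and cD = assms(4)
  define S where "S = C \<inter> D"
  define j where "j = card (D - C)"
  have fC: "finite C" and fD: "finite D" using conf_fin[OF cC] conf_fin[OF cD] .
  have fS: "finite S" using fC unfolding S_def by auto
  have e1: "D = S \<union> (D - C)" unfolding S_def by auto
  have "card (S \<union> (D - C)) = card S + card (D - C)" using fS fD
    by (intro card_Un_disjoint) (auto simp: S_def)
  then have cD1: "card D = card S + j" unfolding j_def using e1 by simp
  have e2: "C = S \<union> (C - D)" unfolding S_def by auto
  have "card (S \<union> (C - D)) = card S + card (C - D)" using fS fC
    by (intro card_Un_disjoint) (auto simp: S_def)
  then have cC1: "card C = card S + card (C - D)" using e2 by simp
  have cCD: "card C = card D" using cC cD unfolding configuration_def by simp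
  have jCD: "card (C - D) = j" using cD1 cC1 cCD by simp
  have j1: "j \<ge> 1"
  proof (rule ccontr)
    assume "\<not> j \<ge> 1"
    then have "card (D - C) = 0" unfolding j_def by simp
    then have "D - C = {}" using fD by simp
    then have "D \<subseteq> C" by auto
    then have "D = C" using card_subset_eq[OF fC \<open>D \<subseteq> C\<close>] cCD by simp
    then show False using assms(5) by simp
  qed
  obtain x where xS: "x \<in> S" using ne unfolding S_def by auto
  have j4: "j \<le> 4" using key[OF G cC cD, of x] xS nonnb_le2[OF cC, of x] nonnb_le2[OF cD, of x]
    unfolding j_def S_def by auto
  have "(\<Sum>u\<in>S. j) \<le> (\<Sum>u\<in>S. card (nonnb E C u) + card (nonnb E D u))"
    using key[OF G cC cD] unfolding S_def j_def by (intro sum_mono) auto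
  also have "\<dots> = (\<Sum>u\<in>S. card (nonnb E C u)) + (\<Sum>u\<in>S. card (nonnb E D u))"
    by (rule sum.distrib)
  also have "\<dots> \<le> (\<Sum>u\<in>C. card (nonnb E C u)) + (\<Sum>u\<in>D. card (nonnb E D u))"
    using fC fD unfolding S_def by (intro add_mono sum_mono2) auto
  also have "\<dots> \<le> 8" using nonnb_sum[OF cC] nonnb_sum[OF cD] by simp
  finally have prod: "card S * j \<le> 8" by simp
  have cS: "card S + j = r + 1" using cD1 cD unfolding configuration_def by simp
  show False
  proof (cases "j = 1")
    case True
    have "card (C - D) = 1" using jCD True by simp
    then obtain c where c: "C - D = {c}" using card_1_singleton_iff[of "C - D"] by auto
    have "card (D - C) = 1" using True unfolding j_def by simp
    then obtain d where d: "D - C = {d}" using card_1_singleton_iff[of "D - C"] by auto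
    have "r + card (nonnb E C c) \<le> 4 + card (nonnb E D d)" using half[OF G cC cD c d] .
    moreover have "r + card (nonnb E D d) \<le> 4 + card (nonnb E C c)" using half[OF G cD cC d c] .
    ultimately show False using r6 by linarith
  next
    case False
    then have "j = 2 \<or> j = 3 \<or> j = 4" using j1 j4 by auto
    then show False
    proof (elim disjE)
      assume "j = 2" then show False using prod cS r6 by simp
    next
      assume "j = 3" then show False using prod cS r6 by simp
    next
      assume "j = 4" then show False using prod cS r6 by simp
    qed
  qed
qed
end
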